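(* Let $G$ be a directed multigraph on $[n+1]$ with edges $i\to j$ for $i<j$, and for $i=1,\ldots,n$ let $P_i=\mathcal{F}_G(e_i-e_{n+1})\subset\mathbb{R}^{E(G)}$. Let $G^\star$ be the graph on $\{0,1,\ldots,n+1\}$ obtained from $G$ by adding vertex $0$ and edges $(0,i)$, $i=1,\ldots,n$, and identify $\mathbb{R}^n\times\mathbb{R}^{E(G)}$ with $\mathbb{R}^{E(G^\star)}$ by letting the $i$-th coordinate of $\mathbb{R}^n$ correspond to the edge $(0,i)$. Then the Cayley embedding $\mathcal{C}(P_1,\ldots,P_n)$ equals the flow polytope $\mathcal{F}_{G^\star}(e_0-e_{n+1})$, i.e. the flow polytope of $G^\star$ with netflow $1$ at vertex $0$, $-1$ at vertex $n+1$ and $0$ elsewhere.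
   Context: $\mathcal{F}_H({\bf v})$ is the set of $f\in\mathbb{R}_{\ge0}^{E(H)}$ with outflow minus inflow at each vertex $k$ equal to $v_k$; $e_i-e_{n+1}$ is the netflow $1$ at vertex $i$, $-1$ at $n+1$, $0$ elsewhere. The Cayley embedding of polytopes $P_1,\ldots,P_n\subset\mathbb{R}^N$ is $\mathcal{C}(P_1,\ldots,P_n)=\mathrm{conv}\big(\bigcup_{i=1}^n \{{\sf e}_i\}\times P_i\big)\subset\mathbb{R}^n\times\mathbb{R}^N$, where ${\sf e}_1,\ldots,{\sf e}_n$ is the standard basis of $\mathbb{R}^n$. *)

theory Defs
  imports Complex_Main
begin

definition conv :: "('a \<Rightarrow> real) set \<Rightarrow> ('a \<Rightarrow> real) set" where
  "conv S = {x. \<exists>(k::nat) (c::nat \<Rightarrow> real) p.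
      (\<forall>j<k. 0 \<le> c j \<and> p j \<in> S) \<and> (\<Sum>j<k. c j) = 1 \<and>
      x = (\<lambda>z. \<Sum>j<k. c j * p j z)}"

definition flow_polytope ::
  "'e set \<Rightarrow> ('e \<Rightarrow> nat) \<Rightarrow> ('e \<Rightarrow> nat) \<Rightarrow> (nat \<Rightarrow> real) \<Rightarrow> ('e \<Rightarrow> real) set" where
  "flow_polytope E src tgt v = {f.
      (\<forall>e. e \<notin> E \<longrightarrow> f e = 0) \<and> (\<forall>e\<in>E. 0 \<le> f e) \<and>
      (\<forall>k. (\<Sum>e\<in>{e\<in>E. src e = k}. f e) - (\<Sum>e\<in>{e\<in>E. tgt e = k}. f e) = v k)}"

definition netflow :: "nat \<Rightarrow> nat \<Rightarrow> nat \<Rightarrow> real" where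
  "netflow a b = (\<lambda>k. (if k = a then 1 else 0) - (if k = b then 1 else 0))"

(* Cayley embedding C(P_1,...,P_n) in R^n x R^N, where a point (x,p) is encoded as the
   function on ('nat + 'c) sending Inl i to x_i and Inr c to p c. *)
definition cayley :: "nat \<Rightarrow> (nat \<Rightarrow> ('c \<Rightarrow> real) set) \<Rightarrow> (nat + 'c \<Rightarrow> real) set" where
  "cayley n P = conv (\<Union>i\<in>{1..n}.
      {(\<lambda>z. case z of Inl j \<Rightarrow> (if j = i then 1 else 0) | Inr c \<Rightarrow> p c) | p. p \<in> P i})"

(* G^star: add vertex 0 and edges Inl i = (0,i), i = 1..n; old edges are Inr e *)
definition star_edges :: "nat \<Rightarrow> 'e set \<Rightarrow> (nat + 'e) set" where
  "star_edges n E = Inl ` {1..n} \<union> Inr ` E"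

definition star_tl :: "('e \<Rightarrow> nat) \<Rightarrow> nat + 'e \<Rightarrow> nat" where
  "star_tl src z = (case z of Inl i \<Rightarrow> 0 | Inr e \<Rightarrow> src e)"

definition star_hd :: "('e \<Rightarrow> nat) \<Rightarrow> nat + 'e \<Rightarrow> nat" where
  "star_hd tgt z = (case z of Inl i \<Rightarrow> i | Inr e \<Rightarrow> tgt e)"

end

theory Submission
  imports Defs
begin

definition dv :: "'e set \<Rightarrow> ('e \<Rightarrow> nat) \<Rightarrow> ('e \<Rightarrow> nat) \<Rightarrow> ('e \<Rightarrow> real) \<Rightarrow> nat \<Rightarrow> real" where
  "dv E src tgt f k = (\<Sum>e\<in>{e\<in>E. src e = k}. f e) - (\<Sum>e\<in>{e\<in>E. tgt e = k}. f e)"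

lemma flow_iff: "f \<in> flow_polytope E src tgt v \<longleftrightarrow>
  (\<forall>e. e \<notin> E \<longrightarrow> f e = 0) \<and> (\<forall>e\<in>E. 0 \<le> f e) \<and> (\<forall>k. dv E src tgt f k = v k)"
  by (simp add: flow_polytope_def dv_def)

lemma dv_sum: "dv E src tgt (\<lambda>e. \<Sum>j\<in>J. F j e) k = (\<Sum>j\<in>J. dv E src tgt (F j) k)"
  unfolding dv_def
  apply (subst sum.swap) apply (subst (2) sum.swap)
  by (simp add: sum_subtractf)

lemma dv_scale: "dv E src tgt (\<lambda>e. c * f e) k = c * dv E src tgt f k"
  by (simp add: dv_def sum_distrib_left right_diff_distrib)

lemma dv_add: "dv E src tgt (\<lambda>e. f e + g e) k = dv E src tgt f k + dv E src tgt g k"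
  by (simp add: dv_def sum.distrib)

lemma dv_zero: "dv E src tgt (\<lambda>e. 0) k = 0"
  by (simp add: dv_def)

lemma dv_ind: "finite E \<Longrightarrow> e0 \<in> E \<Longrightarrow>
   dv E src tgt (\<lambda>e. if e = e0 then 1 else 0) k = netflow (src e0) (tgt e0) k"
  by (auto simp add: dv_def netflow_def sum.delta)

lemma dv_cong_E: "finite E \<Longrightarrow> E' \<subseteq> E \<Longrightarrow> \<forall>e. e \<notin> E' \<longrightarrow> f e = 0 \<Longrightarrow>
   dv E src tgt f k = dv E' src tgt f k"
  unfolding dv_def
  apply (subst sum.mono_neutral_right[of "{e\<in>E. src e = k}" "{e\<in>E'. src e = k}"])
     apply auto[3]
  apply (subst sum.mono_neutral_right[of "{e\<in>E. tgt e = k}" "{e\<in>E'. tgt e = k}"])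
  by auto

lemma flow_mono: "finite E \<Longrightarrow> E' \<subseteq> E \<Longrightarrow> f \<in> flow_polytope E' src tgt v \<Longrightarrow>
   f \<in> flow_polytope E src tgt v"
  unfolding flow_iff using dv_cong_E[of E E' f src tgt] by auto

lemma flow_convex:
  assumes "finite J" "\<forall>j\<in>J. 0 \<le> w j" "sum w J = 1"
    "\<forall>j\<in>J. w j = 0 \<or> F j \<in> flow_polytope E src tgt v"
  shows "(\<lambda>e. \<Sum>j\<in>J. w j * F j e) \<in> flow_polytope E src tgt v"
  unfolding flow_iff
proof (intro conjI allI impI ballI)
  fix e assume "e \<notin> E"
  then show "(\<Sum>j\<in>J. w j * F j e) = 0" using assms(4)
    by (intro sum.neutral) (auto simp: flow_iff)
next
  fix e assume "e \<in> E"
  then show "0 \<le> (\<Sum>j\<in>J. w j * F j e)" using assms(2,4)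
    by (intro sum_nonneg) (auto simp: flow_iff)
next
  fix k
  have "dv E src tgt (\<lambda>e. \<Sum>j\<in>J. w j * F j e) k = (\<Sum>j\<in>J. w j * dv E src tgt (F j) k)"
    by (simp add: dv_sum dv_scale)
  also have "\<dots> = (\<Sum>j\<in>J. w j * v k)"
    using assms(4) by (intro sum.cong) (auto simp: flow_iff)
  also have "\<dots> = v k" using assms(3) by (simp add: sum_distrib_right[symmetric])
  finally show "dv E src tgt (\<lambda>e. \<Sum>j\<in>J. w j * F j e) k = v k" .
qed


lemma decomp:
  "n + 1 - a = m \<Longrightarrow> finite E \<Longrightarrow> (\<forall>e\<in>E. a \<le> src e \<and> src e < tgt e \<and> tgt e \<le> n + 1) \<Longrightarrow>
   (\<forall>e. e \<notin> E \<longrightarrow> g e = 0) \<Longrightarrow> (\<forall>e\<in>E. 0 \<le> g e) \<Longrightarrow> (\<forall>i. 0 \<le> s i) \<Longrightarrow>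
   (\<forall>k. dv E src tgt g k = (if a \<le> k \<and> k \<le> n then s k else 0) - (if k = n + 1 then (\<Sum>i=a..n. s i) else 0)) \<Longrightarrow>
   \<exists>p. (\<forall>i\<in>{a..n}. 0 < s i \<longrightarrow> p i \<in> flow_polytope E src tgt (netflow i (n + 1))) \<and>
       (\<forall>e. g e = (\<Sum>i=a..n. s i * p i e))"
proof (induction m arbitrary: a E g s)
  case 0
  then have "E = {}" by fastforce
  then have "\<forall>e. g e = 0" using 0 by auto
  moreover have "{a..n} = {}" using 0 by auto
  ultimately show ?case by auto
next
  case (Suc m)
  note fin = Suc.prems(2) and rng = Suc.prems(3) and gsupp = Suc.prems(4) and gnn = Suc.prems(5)
    and snn = Suc.prems(6) and gdv = Suc.prems(7)
  have an: "a \<le> n" using Suc.prems(1) by auto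
  define E1 where "E1 = {e\<in>E. src e = a}"
  define E' where "E' = E - E1"
  define g' where "g' = (\<lambda>e. if e \<in> E1 then 0 else g e)"
  define h where "h = (\<lambda>k. \<Sum>e\<in>{e\<in>E1. tgt e = k}. g e)"
  define s' where "s' = (\<lambda>k. s k + h k)"
  have finE1: "finite E1" using fin by (simp add: E1_def)
  have hnn: "\<And>k. 0 \<le> h k" unfolding h_def using gnn by (intro sum_nonneg) (auto simp: E1_def)
  have h0: "\<And>k. \<not> (Suc a \<le> k \<and> k \<le> n + 1) \<Longrightarrow> h k = 0"
    unfolding h_def using rng by (intro sum.neutral) (auto simp: E1_def)
  have sumE1: "sum g E1 = (\<Sum>k=Suc a..n+1. h k)"
    unfolding h_def using rng finE1
    by (intro sum.group[symmetric]) (auto simp: E1_def)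
  have dva: "dv E src tgt g a = sum g E1"
  proof -
    have ee: "{e\<in>E. tgt e = a} = {}" using rng by fastforce
    show ?thesis unfolding dv_def ee by (simp add: E1_def)
  qed
  have sa: "s a = sum g E1" using gdv[rule_format, of a] an dva by simp
  have dvE1: "\<And>k. dv E src tgt (\<lambda>e. if e \<in> E1 then g e else 0) k = (if k = a then sum g E1 else 0) - h k"
  proof -
    fix k
    have 1: "(\<Sum>e\<in>{e\<in>E. src e = k}. if e \<in> E1 then g e else 0) = (if k = a then sum g E1 else 0)"
      using fin by (simp add: sum.inter_filter[symmetric] E1_def)
    have 2: "(\<Sum>e\<in>{e\<in>E. tgt e = k}. if e \<in> E1 then g e else 0) = h k"
      using fin unfolding h_def by (simp add: sum.inter_filter[symmetric] E1_def) (auto intro: arg_cong[where f="sum g"])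
    show "?thesis k" by (simp add: dv_def 1 2)
  qed
  have gsplit: "\<And>e. g e = (if e \<in> E1 then g e else 0) + g' e" by (simp add: g'_def)
  have dvg': "\<And>k. dv E' src tgt g' k = dv E src tgt g k - ((if k = a then sum g E1 else 0) - h k)"
  proof -
    fix k
    have "dv E' src tgt g' k = dv E src tgt g' k"
      using fin gsupp by (intro dv_cong_E[symmetric]) (auto simp: E'_def g'_def)
    moreover have "dv E src tgt g k = dv E src tgt (\<lambda>e. (if e \<in> E1 then g e else 0) + g' e) k"
      by (rule arg_cong[where f="\<lambda>f. dv E src tgt f k"]) (auto simp: g'_def)
    moreover have "dv E src tgt (\<lambda>e. (if e \<in> E1 then g e else 0) + g' e) k = dv E src tgt (\<lambda>e. if e \<in> E1 then g e else 0) k + dv E src tgt g' k"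
      by (rule dv_add)
    ultimately show "?thesis k" using dvE1[of k] by simp
  qed
  have sums': "(\<Sum>i=Suc a..n. s' i) = (\<Sum>i=a..n. s i) - h (n+1)"
  proof -
    have "(\<Sum>i=Suc a..n. s' i) = (\<Sum>i=Suc a..n. s i) + (\<Sum>i=Suc a..n. h i)"
      by (simp add: s'_def sum.distrib)
    moreover have "(\<Sum>i=a..n. s i) = s a + (\<Sum>i=Suc a..n. s i)" using an by (simp add: sum.atLeast_Suc_atMost)
    moreover have "(\<Sum>k=Suc a..n+1. h k) = (\<Sum>k=Suc a..n. h k) + h (n+1)" using an by simp
    ultimately show ?thesis using sa sumE1 by simp
  qed
  have dvg'2: "\<forall>k. dv E' src tgt g' k = (if Suc a \<le> k \<and> k \<le> n then s' k else 0) - (if k = n + 1 then (\<Sum>i=Suc a..n. s' i) else 0)"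
  proof
    fix k
    show "dv E' src tgt g' k = (if Suc a \<le> k \<and> k \<le> n then s' k else 0) - (if k = n + 1 then (\<Sum>i=Suc a..n. s' i) else 0)"
      unfolding dvg' sums' using gdv[rule_format, of k] sa an h0[of k] h0[of a]
      by (cases "k = a"; cases "k = n+1"; cases "Suc a \<le> k \<and> k \<le> n") (auto simp: s'_def)
  qed
  have "\<exists>q. (\<forall>i\<in>{Suc a..n}. 0 < s' i \<longrightarrow> q i \<in> flow_polytope E' src tgt (netflow i (n + 1))) \<and>
       (\<forall>e. g' e = (\<Sum>i=Suc a..n. s' i * q i e))"
  proof (rule Suc.IH)
    show "n + 1 - Suc a = m" using Suc.prems(1) by auto
    show "finite E'" using fin by (simp add: E'_def)
    show "\<forall>e\<in>E'. Suc a \<le> src e \<and> src e < tgt e \<and> tgt e \<le> n + 1"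
      using rng by (force simp: E'_def E1_def)
    show "\<forall>e. e \<notin> E' \<longrightarrow> g' e = 0" using gsupp by (auto simp: E'_def g'_def)
    show "\<forall>e\<in>E'. 0 \<le> g' e" using gnn by (auto simp: E'_def g'_def)
    show "\<forall>i. 0 \<le> s' i" using snn hnn by (simp add: s'_def add_nonneg_nonneg)
    show "\<forall>k. dv E' src tgt g' k = (if Suc a \<le> k \<and> k \<le> n then s' k else 0) - (if k = n + 1 then (\<Sum>i=Suc a..n. s' i) else 0)"
      by (rule dvg'2)
  qed
  then obtain q where qflow: "\<forall>i\<in>{Suc a..n}. 0 < s' i \<longrightarrow> q i \<in> flow_polytope E' src tgt (netflow i (n + 1))"
    and qsum: "\<forall>e. g' e = (\<Sum>i=Suc a..n. s' i * q i e)" by blast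
  define Q where "Q = (\<lambda>k. if k \<le> n then q k else (\<lambda>_. 0))"
  define r where "r = (\<lambda>e' e. (if e = e' then 1 else 0) + Q (tgt e') e)"
  define p where "p = (\<lambda>i. if i = a then (\<lambda>e. \<Sum>e'\<in>E1. (g e' / s a) * r e' e) else q i)"
  have E'E: "E' \<subseteq> E" by (auto simp: E'_def)
  have rflow: "\<And>e'. e' \<in> E1 \<Longrightarrow> g e' \<noteq> 0 \<Longrightarrow> r e' \<in> flow_polytope E src tgt (netflow a (n + 1))"
  proof -
    fix e' assume e': "e' \<in> E1" "g e' \<noteq> 0"
    have e'E: "e' \<in> E" "src e' = a" using e' by (auto simp: E1_def)
    have gpos: "0 < g e'" using gnn e'E e'(2) by force
    have Qfl: "Q (tgt e') \<in> flow_polytope E src tgt (netflow (tgt e') (n + 1)) \<or> (tgt e' = n + 1 \<and> Q (tgt e') = (\<lambda>_. 0))"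
    proof (cases "tgt e' \<le> n")
      case True
      have "g e' \<le> h (tgt e')" unfolding h_def
        using fin e' gnn by (intro member_le_sum) (auto simp: E1_def)
      then have "0 < s' (tgt e')" using gpos snn by (simp add: s'_def add_nonneg_pos) 
      moreover have "tgt e' \<in> {Suc a..n}" using True rng e'E by force
      ultimately have "q (tgt e') \<in> flow_polytope E' src tgt (netflow (tgt e') (n + 1))" using qflow by blast
      then show ?thesis using True flow_mono[OF fin E'E] by (simp add: Q_def)
    next
      case False
      then show ?thesis using rng e'E by (force simp: Q_def)
    qed
    show "r e' \<in> flow_polytope E src tgt (netflow a (n + 1))"
      unfolding flow_iff
    proof (intro conjI allI impI ballI)
      fix e assume "e \<notin> E" then show "r e' e = 0" using Qfl e'E by (auto simp: r_def flow_iff)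
    next
      fix e assume "e \<in> E" then show "0 \<le> r e' e" using Qfl by (auto simp: r_def flow_iff)
    next
      fix k
      have "dv E src tgt (r e') k = netflow a (tgt e') k + dv E src tgt (Q (tgt e')) k"
        unfolding r_def by (simp only: dv_add dv_ind[OF fin e'E(1)] e'E(2))
      then show "dv E src tgt (r e') k = netflow a (n + 1) k"
        using Qfl by (auto simp: flow_iff netflow_def dv_zero)
    qed
  qed
  show ?case
  proof (intro exI conjI ballI impI allI)
    fix i assume i: "i \<in> {a..n}" "0 < s i"
    show "p i \<in> flow_polytope E src tgt (netflow i (n + 1))"
    proof (cases "i = a")
      case True
      have "(\<lambda>e. \<Sum>e'\<in>E1. (g e' / s a) * r e' e) \<in> flow_polytope E src tgt (netflow a (n + 1))"
      proof (rule flow_convex)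
        show "finite E1" by (rule finE1)
        show "\<forall>j\<in>E1. 0 \<le> g j / s a" using gnn snn by (auto simp: E1_def)
        show "sum (\<lambda>j. g j / s a) E1 = 1" using sa i True by (simp add: sum_divide_distrib[symmetric])
        show "\<forall>j\<in>E1. g j / s a = 0 \<or> r j \<in> flow_polytope E src tgt (netflow a (n + 1))"
          using rflow by auto
      qed
      then show ?thesis using True by (simp add: p_def)
    next
      case False
      then have "i \<in> {Suc a..n}" "0 < s' i" using i hnn by (auto simp: s'_def add_pos_nonneg)
      then show ?thesis using qflow False flow_mono[OF fin E'E] by (simp add: p_def)
    qed
  next
    fix e
    have A: "s a * p a e = (\<Sum>e'\<in>E1. g e' * r e' e)"
    proof (cases "s a = 0")
      case True
      then have "\<forall>e'\<in>E1. g e' = 0" using sa finE1 gnn sum_nonneg_eq_0_iff[of E1 g] by (auto simp: E1_def)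
      then show ?thesis using True by simp
    next
      case False
      then show ?thesis by (simp add: p_def sum_distrib_left)
    qed
    have B: "(\<Sum>e'\<in>E1. g e' * r e' e) = (if e \<in> E1 then g e else 0) + (\<Sum>e'\<in>E1. g e' * Q (tgt e') e)"
      using finE1 by (simp add: r_def distrib_left sum.distrib if_distrib[of "(*) _"] sum.delta' cong: if_cong)
    have C: "(\<Sum>e'\<in>E1. g e' * Q (tgt e') e) = (\<Sum>k=Suc a..n. h k * q k e)"
    proof -
      have "(\<Sum>e'\<in>E1. g e' * Q (tgt e') e) = (\<Sum>k=Suc a..n+1. \<Sum>e'\<in>{e'\<in>E1. tgt e' = k}. g e' * Q (tgt e') e)"
        using finE1 rng by (intro sum.group[symmetric]) (auto simp: E1_def)
      also have "\<dots> = (\<Sum>k=Suc a..n+1. h k * Q k e)"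
        unfolding h_def sum_distrib_right by (intro sum.cong) auto
      also have "\<dots> = (\<Sum>k=Suc a..n. h k * q k e)"
        using an by (simp add: Q_def)
      finally show ?thesis .
    qed
    have D: "(\<Sum>i=a..n. s i * p i e) = s a * p a e + (\<Sum>i=Suc a..n. s i * q i e)"
      using an by (simp add: sum.atLeast_Suc_atMost p_def)
    have "g' e = (\<Sum>k=Suc a..n. h k * q k e) + (\<Sum>i=Suc a..n. s i * q i e)"
      using qsum by (simp add: s'_def distrib_right sum.distrib)
    then show "g e = (\<Sum>i=a..n. s i * p i e)"
      using gsplit[of e] A B C D by simp
  qed
qed


lemma sum_star:
  assumes "finite A" "finite B"
  shows "(\<Sum>z\<in>{z\<in>Inl`A \<union> Inr`B. P z}. h z) = (\<Sum>a\<in>{a\<in>A. P (Inl a)}. h (Inl a)) + (\<Sum>b\<in>{b\<in>B. P (Inr b)}. h (Inr b))"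
proof -
  have "{z\<in>Inl`A \<union> Inr`B. P z} = Inl`{a\<in>A. P (Inl a)} \<union> Inr`{b\<in>B. P (Inr b)}" by auto
  moreover have "sum h (Inl`{a\<in>A. P (Inl a)} \<union> Inr`{b\<in>B. P (Inr b)}) =
     sum h (Inl`{a\<in>A. P (Inl a)}) + sum h (Inr`{b\<in>B. P (Inr b)})"
    using assms by (intro sum.union_disjoint) auto
  moreover have "sum h (Inl`{a\<in>A. P (Inl a)}) = (\<Sum>a\<in>{a\<in>A. P (Inl a)}. h (Inl a))"
    by (simp add: sum.reindex)
  moreover have "sum h (Inr`{b\<in>B. P (Inr b)}) = (\<Sum>b\<in>{b\<in>B. P (Inr b)}. h (Inr b))"
    by (simp add: sum.reindex)
  ultimately show ?thesis by simp
qed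

lemma dv_star:
  assumes "finite E" "\<forall>e\<in>E. 1 \<le> src e \<and> src e < tgt e"
  shows "dv (star_edges n E) (star_tl src) (star_hd tgt) f k =
    (if k = 0 then (\<Sum>i=1..n. f (Inl i)) else 0) + dv E src tgt (\<lambda>e. f (Inr e)) k
     - (if 1 \<le> k \<and> k \<le> n then f (Inl k) else 0)"
proof -
  have 1: "{i\<in>{1..n}. (0::nat) = k} = (if k = 0 then {1..n} else {})" by auto
  have 2: "{i\<in>{1..n}. i = k} = (if 1 \<le> k \<and> k \<le> n then {k} else {})" by auto
  have 3: "{e\<in>E. src e = 0} = {}" "{e\<in>E. tgt e = 0} = {}" using assms(2) by fastforce+
  show ?thesis unfolding dv_def star_edges_def sum_star[OF finite_atLeastAtMost assms(1)]
    apply (simp only: star_tl_def star_hd_def sum.case 1 2 3)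
    by (cases "k = 0") auto
qed


theorem proposition7p2:
  fixes n :: nat and E :: "'e set" and src tgt :: "'e \<Rightarrow> nat"
  assumes "finite E"
    and "\<forall>e\<in>E. 1 \<le> src e \<and> src e < tgt e \<and> tgt e \<le> n + 1"
  shows "cayley n (\<lambda>i. flow_polytope E src tgt (netflow i (n + 1)))
       = flow_polytope (star_edges n E) (star_tl src) (star_hd tgt) (netflow 0 (n + 1))"
proof -
  let ?R = "flow_polytope (star_edges n E) (star_tl src) (star_hd tgt) (netflow 0 (n + 1))"
  let ?S = "\<Union>i\<in>{1..n}. {(\<lambda>z. case z of Inl j \<Rightarrow> (if j = i then 1 else 0) | Inr c \<Rightarrow> p c) | p.
              p \<in> flow_polytope E src tgt (netflow i (n + 1))}"
  have fin: "finite (star_edges n E)" using assms(1) by (simp add: star_edges_def)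
  have rng: "\<forall>e\<in>E. 1 \<le> src e \<and> src e < tgt e" using assms(2) by auto
  have gen: "(\<lambda>z. case z of Inl j \<Rightarrow> (if j = i then 1 else 0) | Inr c \<Rightarrow> p c) \<in> ?R"
    if i: "i \<in> {1..n}" and p: "p \<in> flow_polytope E src tgt (netflow i (n + 1))" for i p
    unfolding flow_iff
  proof (intro conjI allI impI ballI)
    fix z assume "z \<notin> star_edges n E"
    then show "(case z of Inl j \<Rightarrow> (if j = i then 1 else 0) | Inr c \<Rightarrow> p c) = 0"
      using i p by (cases z) (auto simp: star_edges_def flow_iff)
  next
    fix z assume "z \<in> star_edges n E"
    then show "0 \<le> (case z of Inl j \<Rightarrow> (if j = i then 1 else 0) | Inr c \<Rightarrow> p c)"
      using i p by (cases z) (auto simp: star_edges_def flow_iff)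
  next
    fix k
    have s1: "(\<Sum>j=1..n. (if j = i then 1 else 0::real)) = 1" using i by simp
    have "dv E src tgt p k = netflow i (n + 1) k" using p by (simp add: flow_iff)
    then show "dv (star_edges n E) (star_tl src) (star_hd tgt) (\<lambda>z. case z of Inl j \<Rightarrow> (if j = i then 1 else 0) | Inr c \<Rightarrow> p c) k = netflow 0 (n + 1) k"
      unfolding dv_star[OF assms(1) rng] using s1 i by (auto simp: netflow_def)
  qed
  show ?thesis
  proof
    show "cayley n (\<lambda>i. flow_polytope E src tgt (netflow i (n + 1))) \<subseteq> ?R"
    proof
      fix x assume "x \<in> cayley n (\<lambda>i. flow_polytope E src tgt (netflow i (n + 1)))"
      then obtain k :: nat and c :: "nat \<Rightarrow> real" and p where kc: "\<forall>j<k. 0 \<le> c j \<and> p j \<in> ?S" "(\<Sum>j<k. c j) = 1"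
        "x = (\<lambda>z. \<Sum>j<k. c j * p j z)" unfolding cayley_def conv_def by blast
      have "(\<lambda>z. \<Sum>j<k. c j * p j z) \<in> ?R"
        using kc gen by (intro flow_convex) auto
      then show "x \<in> ?R" using kc by simp
    qed
  next
    show "?R \<subseteq> cayley n (\<lambda>i. flow_polytope E src tgt (netflow i (n + 1)))"
    proof
      fix f assume f: "f \<in> ?R"
      define x where "x = (\<lambda>i. f (Inl i))"
      define g where "g = (\<lambda>e. f (Inr e))"
      have fsupp: "\<forall>z. z \<notin> star_edges n E \<longrightarrow> f z = 0" and fnn: "\<forall>z\<in>star_edges n E. 0 \<le> f z"
        and fdv: "\<forall>k. dv (star_edges n E) (star_tl src) (star_hd tgt) f k = netflow 0 (n + 1) k"
        using f by (auto simp: flow_iff)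
      have dvs: "(if k = 0 then (\<Sum>i=1..n. x i) else 0) + dv E src tgt g k
          - (if 1 \<le> k \<and> k \<le> n then x k else 0) = netflow 0 (n + 1) k" for k
        unfolding x_def g_def using fdv[rule_format, of k] dv_star[OF assms(1) rng, of n f k] by simp
      have dvg0: "dv E src tgt g 0 = 0"
      proof -
        have ee: "{e\<in>E. src e = 0} = {}" "{e\<in>E. tgt e = 0} = {}" using rng by fastforce+
        show ?thesis unfolding dv_def ee by simp
      qed
      have sx: "(\<Sum>i=1..n. x i) = 1" using dvs[of 0] dvg0 by (simp add: netflow_def)
      have xnn: "\<forall>i. 0 \<le> (if 1 \<le> i \<and> i \<le> n then x i else 0)"
        using fnn by (auto simp: x_def star_edges_def)
      define x' where "x' = (\<lambda>i. if 1 \<le> i \<and> i \<le> n then x i else 0)"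
      have sx': "(\<Sum>i=1..n. x' i) = (\<Sum>i=1..n. x i)" by (simp add: x'_def)
      have "\<exists>p. (\<forall>i\<in>{1..n}. 0 < x' i \<longrightarrow> p i \<in> flow_polytope E src tgt (netflow i (n + 1))) \<and>
          (\<forall>e. g e = (\<Sum>i=1..n. x' i * p i e))"
      proof (rule decomp[OF refl assms(1)])
        show "\<forall>e\<in>E. 1 \<le> src e \<and> src e < tgt e \<and> tgt e \<le> n + 1" by (rule assms(2))
        show "\<forall>e. e \<notin> E \<longrightarrow> g e = 0" using fsupp by (auto simp: g_def star_edges_def)
        show "\<forall>e\<in>E. 0 \<le> g e" using fnn by (auto simp: g_def star_edges_def)
        show "\<forall>i. 0 \<le> x' i" using xnn by (simp add: x'_def)
        show "\<forall>k. dv E src tgt g k = (if 1 \<le> k \<and> k \<le> n then x' k else 0) - (if k = n + 1 then sum x' {1..n} else 0)"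
        proof
          fix k
          show "dv E src tgt g k = (if 1 \<le> k \<and> k \<le> n then x' k else 0) - (if k = n + 1 then sum x' {1..n} else 0)"
            using dvs[of k] dvg0 sx sx' by (cases "k = 0") (auto simp: netflow_def x'_def)
        qed
      qed
      then obtain p where pfl: "\<forall>i\<in>{1..n}. 0 < x i \<longrightarrow> p i \<in> flow_polytope E src tgt (netflow i (n + 1))"
        and psum: "\<forall>e. g e = (\<Sum>i=1..n. x i * p i e)"
        by (auto simp: x'_def)
      have "\<exists>i0\<in>{1..n}. 0 < x i0"
      proof (rule ccontr)
        assume "\<not> ?thesis"
        then have "\<forall>i\<in>{1..n}. x i \<le> 0" by auto
        then have "(\<Sum>i=1..n. x i) \<le> 0" by (intro sum_nonpos) auto
        then show False using sx by simp
      qed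
      then obtain i0 where i0: "i0 \<in> {1..n}" "0 < x i0" by blast
      define gen where "gen = (\<lambda>i z. case z of Inl j \<Rightarrow> (if j = i then 1 else 0) | Inr c \<Rightarrow> p i c)"
      define idx where "idx = (\<lambda>j. if 0 < x (Suc j) then Suc j else i0)"
      have xnn2: "\<And>i. i \<in> {1..n} \<Longrightarrow> 0 \<le> x i"
      proof - fix i assume "i \<in> {1..n}" then show "0 \<le> x i" using xnn[rule_format, of i] by simp qed
      have key: "\<And>j (F :: nat \<Rightarrow> real). j < n \<Longrightarrow> x (Suc j) * F (idx j) = x (Suc j) * F (Suc j)"
      proof -
        fix j and F :: "nat \<Rightarrow> real" assume "j < n"
        then have "0 \<le> x (Suc j)" using xnn2 by auto
        then show "x (Suc j) * F (idx j) = x (Suc j) * F (Suc j)" by (cases "x (Suc j) = 0") (auto simp: idx_def)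
      qed
      have reidx: "\<And>h :: nat \<Rightarrow> real. (\<Sum>j<n. h (Suc j)) = (\<Sum>i=1..n. h i)"
      proof -
        fix h :: "nat \<Rightarrow> real"
        have "(\<Sum>i=1..n. h i) = (\<Sum>i\<in>Suc`{..<n}. h i)" by (simp add: image_Suc_lessThan)
        also have "\<dots> = (\<Sum>j<n. h (Suc j))" by (simp add: sum.reindex)
        finally show "(\<Sum>j<n. h (Suc j)) = (\<Sum>i=1..n. h i)" by simp
      qed
      have memS: "\<forall>j<n. 0 \<le> x (Suc j) \<and> gen (idx j) \<in> ?S"
      proof (intro allI impI conjI)
        fix j assume j: "j < n"
        then show "0 \<le> x (Suc j)" using xnn2 by auto
        have "idx j \<in> {1..n} \<and> 0 < x (idx j)" using i0 j by (auto simp: idx_def)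
        then show "gen (idx j) \<in> ?S" using pfl unfolding gen_def by blast
      qed
      have sum1: "(\<Sum>j<n. x (Suc j)) = 1" using sx reidx by simp
      have feq: "f = (\<lambda>z. \<Sum>j<n. x (Suc j) * gen (idx j) z)"
      proof
        fix z
        have "(\<Sum>j<n. x (Suc j) * gen (idx j) z) = (\<Sum>j<n. x (Suc j) * gen (Suc j) z)"
          using key[of _ "\<lambda>i. gen i z"] by (intro sum.cong) auto
        also have "\<dots> = (\<Sum>i=1..n. x i * gen i z)" by (rule reidx)
        also have "\<dots> = f z"
        proof (cases z)
          case (Inl m)
          have "(\<Sum>i=1..n. x i * gen i z) = (\<Sum>i=1..n. if m = i then x i else 0)"
            using Inl by (intro sum.cong) (auto simp: gen_def)
          also have "\<dots> = (if m \<in> {1..n} then x m else 0)" by (simp add: sum.delta)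
          also have "\<dots> = f z" using Inl fsupp[rule_format, of "Inl m"] by (auto simp: x_def star_edges_def image_iff)
          finally show ?thesis .
        next
          case (Inr e)
          have "(\<Sum>i=1..n. x i * gen i z) = (\<Sum>i=1..n. x i * p i e)"
            using Inr by (simp add: gen_def)
          also have "\<dots> = f z" using psum Inr by (simp add: g_def)
          finally show ?thesis .
        qed
        finally show "f z = (\<Sum>j<n. x (Suc j) * gen (idx j) z)" by simp
      qed
      show "f \<in> cayley n (\<lambda>i. flow_polytope E src tgt (netflow i (n + 1)))"
        unfolding cayley_def conv_def mem_Collect_eq
        apply (rule exI[of _ n], rule exI[of _ "\<lambda>j. x (Suc j)"], rule exI[of _ "\<lambda>j. gen (idx j)"])
        using memS sum1 feq by simp
    qed
  qed
qed


end
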